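(* Let $p$ be an odd prime, $q=p^e$, and let $n,k$ be positive integers. Then: (1) For every $y$ in a field extension of $\mathbb{F}_p$ with $y\neq \tfrac12$, $F_n(1,y(1-y))=\dfrac{y^n-(1-y)^n}{2y-1}$; moreover $F_n(1,\tfrac14)=\dfrac{n}{2^{n-1}}$ in $\mathbb{F}_p$. (2) If $\gcd(n,k)=1$, then $F_{np^k}(1,x)=\bigl(F_n(1,x)\bigr)^{p^k}(1-4x)^{\frac{p^k-1}{2}}$ as polynomials over $\mathbb{F}_p$. (3) If $n_1,n_2$ are positive integers with $n_1\equiv n_2\pmod{q^2-1}$, then $F_{n_1}(1,x_0)=F_{n_2}(1,x_0)$ for every $x_0\in\mathbb{F}_q\setminus\{\tfrac14\}$.
   Context: For an integer $n\ge 1$, the $n$-th reversed Dickson polynomial of the third kind is $F_n(a,x)=\sum_{i=0}^{\lfloor n/2\rfloor}\frac{n-2i}{n-i}\binom{n-i}{i}(-x)^i a^{n-2i}$, where each coefficient $\frac{n-2i}{n-i}\binom{n-i}{i}$ is an integer (read in the field), and $F_0(a,x)=0$. Thus $F_n(1,x)$ is a polynomial with coefficients in $\mathbb{F}_p$. *)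

theory Defs
  imports "HOL-Computational_Algebra.Polynomial" "HOL-Computational_Algebra.Primes" "HOL-Number_Theory.Cong" "HOL-Library.Cardinality"
begin

text \<open>The coefficient (n-2i)/(n-i) * C(n-i,i) is an integer; we compute it as a natural
  number by exact division and map it into the ring. For n = 0 the sum is 0.\<close>

definition rdickson3_coeff :: "nat \<Rightarrow> nat \<Rightarrow> nat" where
  "rdickson3_coeff n i = ((n - 2*i) * ((n - i) choose i)) div (n - i)"

definition rdickson3 :: "nat \<Rightarrow> 'a::comm_ring_1 \<Rightarrow> 'a \<Rightarrow> 'a" where
  "rdickson3 n a x =
     (\<Sum>i = 0..n div 2. of_nat (rdickson3_coeff n i) * (- x) ^ i * a ^ (n - 2*i))"

end

theory Submission
  imports Defs "HOL-Number_Theory.Residues"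
begin


lemma coeff_eq:
  assumes "n \<ge> 1" "i \<le> n div 2"
  shows "rdickson3_coeff n i = (n - 1 - i) choose i"
proof -
  define N where "N = n - i"
  have N: "N > 0" using assms unfolding N_def by linarith
  have "n - 2*i = N - i" unfolding N_def by simp
  moreover have "(N - i) * (N choose i) = N * ((N - 1) choose i)" by (rule binomial_absorb_comp)
  ultimately have "rdickson3_coeff n i = (N * ((N - 1) choose i)) div N"
    unfolding rdickson3_coeff_def N_def by simp
  also have "\<dots> = (N - 1) choose i" using N by simp
  also have "N - 1 = n - 1 - i" unfolding N_def by simp
  finally show ?thesis .
qed

definition U :: "nat \<Rightarrow> nat \<Rightarrow> 'a::comm_ring_1 \<Rightarrow> 'a" where
  "U K m t = (\<Sum>i\<le>K. of_nat (m - i choose i) * t ^ i)"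

lemma U_indep: "K \<ge> m \<Longrightarrow> U K m t = U m m t"
proof (induction K rule: dec_induct)
  case (step K)
  then show ?case by (simp add: U_def)
qed simp

lemma choose_rec: "(m + 1 - j) choose Suc j = (m - j choose j) + (m - j choose Suc j)"
proof (cases "j \<le> m")
  case True
  then have "m + 1 - j = Suc (m - j)" by simp
  then show ?thesis by simp
qed simp

lemma U_rec: "U (Suc K) (m+2) t = t * U K m t + U (Suc K) (m+1) t"
proof -
  have "U (Suc K) (m+2) t = 1 + (\<Sum>j\<le>K. of_nat ((m+1-j) choose Suc j) * t ^ Suc j)"
    unfolding U_def by (subst sum.atMost_Suc_shift) simp
  also have "(\<Sum>j\<le>K. of_nat ((m+1-j) choose Suc j) * t ^ Suc j) = (\<Sum>j\<le>K. of_nat (m - j choose j) * t ^ Suc j + of_nat (m - j choose Suc j) * t ^ Suc j)"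
    by (rule sum.cong[OF refl]) (simp only: choose_rec of_nat_add distrib_right)
  also have "1 + \<dots> = 1 + (\<Sum>j\<le>K. of_nat (m - j choose j) * t ^ Suc j)
       + (\<Sum>j\<le>K. of_nat (m - j choose Suc j) * t ^ Suc j)"
    by (simp add: sum.distrib algebra_simps)
  also have "(\<Sum>j\<le>K. of_nat (m - j choose j) * t ^ Suc j) = t * U K m t"
    unfolding U_def by (simp add: sum_distrib_left algebra_simps)
  finally have c: "U (Suc K) (m+2) t = 1 + t * U K m t + (\<Sum>j\<le>K. of_nat (m - j choose Suc j) * t ^ Suc j)" .
  have e: "1 + (\<Sum>j\<le>K. of_nat (m - j choose Suc j) * t ^ Suc j) = U (Suc K) (m+1) t"
    unfolding U_def by (subst sum.atMost_Suc_shift) simp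
  show ?thesis unfolding c e[symmetric] by (simp add: algebra_simps)
qed

definition FF :: "nat \<Rightarrow> 'a::comm_ring_1 \<Rightarrow> 'a" where
  "FF m x = U m m (- x)"

lemma FF_rec: "FF (m+2) x = FF (m+1) x - x * FF m x"
proof -
  have "FF (m+2) x = U (Suc (m+1)) (m+2) (-x)" by (simp add: FF_def)
  also have "\<dots> = (-x) * U (m+1) m (-x) + U (Suc (m+1)) (m+1) (-x)" by (rule U_rec)
  also have "U (m+1) m (-x) = FF m x" unfolding FF_def by (rule U_indep) simp
  also have "U (Suc (m+1)) (m+1) (-x) = FF (m+1) x" unfolding FF_def by (rule U_indep) simp
  finally show ?thesis by simp
qed

lemma FF_0 [simp]: "FF 0 x = 1" by (simp add: FF_def U_def)
lemma FF_1 [simp]: "FF (Suc 0) x = 1" by (simp add: FF_def U_def)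

lemma rdickson3_FF: "rdickson3 (Suc m) 1 x = FF m x"
proof -
  define d where "d = Suc m div 2"
  have "rdickson3 (Suc m) 1 x = (\<Sum>i\<in>{0..d}. of_nat ((m - i) choose i) * (- x) ^ i)"
    unfolding rdickson3_def d_def
  proof (intro sum.cong refl)
    fix i assume "i \<in> {0..Suc m div 2}"
    then have "rdickson3_coeff (Suc m) i = (m - i) choose i" using coeff_eq[of "Suc m" i] by simp
    then show "of_nat (rdickson3_coeff (Suc m) i) * (- x) ^ i * 1 ^ (Suc m - 2 * i) = of_nat ((m - i) choose i) * (- x) ^ i"
      by simp
  qed
  also have "\<dots> = U d m (-x)" by (simp add: U_def atLeast0AtMost)
  also have "\<dots> = U m m (-x)"
  proof (cases "m = 0")
    case True then show ?thesis by (simp add: d_def)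
  next
    case False
    then have dm: "d \<le> m" unfolding d_def by linarith
    have "U m m (-x) = (\<Sum>i\<in>{..m} - {..d}. of_nat ((m - i) choose i) * (- x) ^ i) + U d m (-x)"
      unfolding U_def using dm by (intro sum.subset_diff) auto
    moreover have "(\<Sum>i\<in>{..m} - {..d}. of_nat ((m - i) choose i) * (- x) ^ i) = 0"
    proof (intro sum.neutral ballI)
      fix i assume "i \<in> {..m} - {..d}"
      then have "m - i < i" unfolding d_def by auto
      then have "(m - i) choose i = 0" by (rule binomial_eq_0)
      then have "(of_nat ((m - i) choose i) :: 'a) = 0" by (simp only: of_nat_0)
      then show "of_nat ((m - i) choose i) * (- x) ^ i = 0" by (simp only: mult_zero_left)
    qed
    ultimately show ?thesis by simp
  qed
  finally show ?thesis unfolding FF_def .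
qed

lemma FF_y:
  fixes y :: "'a::comm_ring_1"
  shows "(2*y - 1) * FF m (y * (1 - y)) = y ^ Suc m - (1 - y) ^ Suc m
       \<and> (2*y - 1) * FF (Suc m) (y * (1 - y)) = y ^ Suc (Suc m) - (1 - y) ^ Suc (Suc m)"
proof (induction m)
  case 0
  then show ?case by (simp add: algebra_simps power2_eq_square)
next
  case (Suc m)
  define X where "X = y * (1 - y)"
  have h1: "(2*y - 1) * FF m X = y ^ Suc m - (1 - y) ^ Suc m"
    and h2: "(2*y - 1) * FF (Suc m) X = y ^ Suc (Suc m) - (1 - y) ^ Suc (Suc m)" using Suc by (auto simp: X_def)
  have r: "FF (Suc (Suc m)) X = FF (Suc m) X - X * FF m X" using FF_rec[of m X] by simp
  have "(2*y - 1) * FF (Suc (Suc m)) X =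
      (2*y - 1) * FF (Suc m) X - X * ((2*y - 1) * FF m X)"
    unfolding r by (simp add: algebra_simps)
  also have "\<dots> = y ^ Suc (Suc (Suc m)) - (1 - y) ^ Suc (Suc m) * (1 - y)"
    unfolding h1 h2 by (simp add: X_def algebra_simps)
  also have "(1 - y) ^ Suc (Suc m) * (1 - y) = (1 - y) ^ Suc (Suc (Suc m))" by (rule power_Suc2[symmetric])
  finally have a: "(2*y - 1) * FF (Suc (Suc m)) X = y ^ Suc (Suc (Suc m)) - (1 - y) ^ Suc (Suc (Suc m))" .
  from h2 a show ?case unfolding X_def by (rule conjI)
qed

lemma rdickson3_y:
  fixes y :: "'a::comm_ring_1"
  assumes "n \<ge> 1"
  shows "(2*y - 1) * rdickson3 n 1 (y * (1 - y)) = y ^ n - (1 - y) ^ n"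
proof -
  obtain m where n: "n = Suc m" using assms by (cases n) auto
  show ?thesis using FF_y[of y m] unfolding n rdickson3_FF by simp
qed

lemma FF_quarter:
  fixes x :: "'a::field"
  assumes "(2::'a) \<noteq> 0"
  shows "2 ^ m * FF m (1/4 :: 'a) = of_nat (m+1) \<and> 2 ^ Suc m * FF (Suc m) (1/4 :: 'a) = of_nat (m+2)"
proof (induction m)
  case 0 show ?case by (simp add: numeral_2_eq_2)
next
  case (Suc m)
  then have h1: "2 ^ m * FF m (1/4 :: 'a) = of_nat (m+1)" and h2: "2 ^ Suc m * FF (Suc m) (1/4 :: 'a) = of_nat (m+2)"
    by auto
  have r: "FF (Suc (Suc m)) (1/4::'a) = FF (Suc m) (1/4) - (1/4) * FF m (1/4)" using FF_rec[of m "1/4::'a"] by simp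
  have "(4::'a) = 2 * 2" by simp
  then have "(4::'a) \<noteq> 0" using assms by (metis no_zero_divisors)
  then have f: "(4::'a) * (1/4) = 1" by simp
  have "2 ^ Suc (Suc m) * FF (Suc (Suc m)) (1/4 :: 'a) = 2 * (2 ^ Suc m * FF (Suc m) (1/4 :: 'a)) - ((4::'a) * (1/4)) * (2 ^ m * FF m (1/4 :: 'a))"
    unfolding r by (simp add: algebra_simps)
  also have "\<dots> = 2 * (2 ^ Suc m * FF (Suc m) (1/4 :: 'a)) - (2 ^ m * FF m (1/4 :: 'a))" unfolding f by simp
  also have "\<dots> = of_nat (Suc m + 2)" unfolding h1 h2 by (simp add: algebra_simps)
  finally have a: "2 ^ Suc (Suc m) * FF (Suc (Suc m)) (1/4 :: 'a) = of_nat (Suc m + 2)" .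
  have b: "2 ^ Suc m * FF (Suc m) (1/4 :: 'a) = of_nat (Suc m + 1)" using h2 by simp
  show ?case using a b by blast
qed



lemma frob:
  fixes a b :: "'r::comm_ring_1"
  assumes p: "prime p" and c: "of_nat p = (0::'r)"
  shows "(a + b) ^ p = a ^ p + b ^ p"
proof -
  have p0: "p > 0" using p prime_gt_0_nat by blast
  have "(a + b) ^ p = (\<Sum>k\<le>p. of_nat (p choose k) * a ^ k * b ^ (p - k))" by (rule binomial_ring)
  also have "\<dots> = (\<Sum>k\<in>{0,p}. of_nat (p choose k) * a ^ k * b ^ (p - k))"
  proof (rule sum.mono_neutral_right)
    show "\<forall>k\<in>{..p} - {0, p}. of_nat (p choose k) * a ^ k * b ^ (p - k) = 0"
    proof
      fix k assume k: "k \<in> {..p} - {0, p}"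
      then have "p dvd (p choose k)" using p by (intro dvd_choose_prime) auto
      then obtain c' where "p choose k = p * c'" by blast
      then have "(of_nat (p choose k) :: 'r) = 0" using c by simp
      then show "of_nat (p choose k) * a ^ k * b ^ (p - k) = 0" by simp
    qed
  qed auto
  also have "\<dots> = a ^ p + b ^ p" using p0 by simp
  finally show ?thesis .
qed

lemma frob_pow:
  fixes a b :: "'r::comm_ring_1"
  assumes p: "prime p" and c: "of_nat p = (0::'r)"
  shows "(a + b) ^ (p ^ k) = a ^ (p ^ k) + b ^ (p ^ k)"
proof (induction k)
  case (Suc k)
  have "(a + b) ^ (p ^ Suc k) = ((a + b) ^ (p ^ k)) ^ p" by (simp add: power_mult[symmetric] mult.commute)
  also have "\<dots> = (a ^ (p ^ k)) ^ p + (b ^ (p ^ k)) ^ p" unfolding Suc by (rule frob[OF p c])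
  also have "\<dots> = a ^ (p ^ Suc k) + b ^ (p ^ Suc k)" by (simp add: power_mult[symmetric] mult.commute)
  finally show ?case .
qed simp

lemma frob_diff:
  fixes a b :: "'r::comm_ring_1"
  assumes p: "prime p" and c: "of_nat p = (0::'r)"
  shows "(a - b) ^ (p ^ k) = a ^ (p ^ k) - b ^ (p ^ k)"
proof -
  have "a ^ (p ^ k) = ((a - b) + b) ^ (p ^ k)" by simp
  also have "\<dots> = (a - b) ^ (p ^ k) + b ^ (p ^ k)" by (rule frob_pow[OF p c])
  finally show ?thesis by simp
qed

lemma ff_power_card:
  fixes x :: "'a :: {field, finite}"
  shows "x ^ CARD('a) = x"
proof (cases "x = 0")
  case False
  have "x * (\<Prod>y\<in>UNIV-{0}. x * y) = x * x ^ (card (UNIV :: 'a set) - 1) * \<Prod>(UNIV-{0})"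
    by (simp add: prod.distrib mult_ac)
  also have "x * x ^ (card (UNIV :: 'a set) - 1) = x ^ Suc (card (UNIV :: 'a set) - 1)"
    by (subst power_Suc) auto
  also have "Suc (card (UNIV :: 'a set) - 1) = card (UNIV :: 'a set)"
    using finite_UNIV_card_ge_0[where ?'a = 'a] by simp
  also have "(\<Prod>y\<in>UNIV-{0}. x * y) = (\<Prod>y\<in>UNIV-{0}. y)"
    by (rule prod.reindex_bij_witness[of _ "\<lambda>y. y / x" "\<lambda>y. x * y"]) (use False in auto)
  finally show ?thesis
    by simp
qed (use finite_UNIV_card_ge_0[where ?'a = 'a] in auto)

lemma ff_CHAR:
  fixes e p :: nat
  assumes "prime p" "e \<ge> 1" "CARD('a :: {field, finite}) = p ^ e"
  shows "CHAR('a) = p"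
proof -
  have pos: "CHAR('a) > 0" by (rule finite_imp_CHAR_pos) simp
  then have pr: "prime CHAR('a)" by (rule prime_CHAR_semidom)
  have "CHAR('a) dvd p ^ e" using CHAR_dvd_CARD[where 'a='a] assms(3) by simp
  then have "CHAR('a) dvd p" using pr prime_dvd_power by blast
  then show ?thesis using pr assms(1) primes_dvd_imp_eq by blast
qed

lemma two_ne0:
  assumes "prime p" "odd p" "CHAR('a::field) = p"
  shows "(2::'a) \<noteq> 0"
proof
  assume "(2::'a) = 0"
  then have "(of_nat 2 :: 'a) = 0" by simp
  then have "p dvd 2" using assms(3) of_nat_eq_0_iff_char_dvd by metis
  then have "p \<le> 2" by (simp add: dvd_imp_le)
  moreover have "p \<ge> 2" using assms(1) prime_ge_2_nat by blast
  ultimately show False using assms(2) by simp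
qed

lemma pcomp_power: "pcompose (p ^ n) q = (pcompose p q) ^ n"
  by (induction n) (simp_all add: pcompose_mult pcompose_1)

lemma pcomp_rdickson3:
  "pcompose (rdickson3 n 1 [:0, 1:]) q = rdickson3 n 1 (q :: 'a::comm_ring_1 poly)"
  unfolding rdickson3_def
  by (simp add: pcompose_sum pcompose_mult pcomp_power pcompose_uminus of_nat_poly pcompose_pCons pcompose_smult)



lemma part2:
  fixes p n k :: nat
  assumes p: "prime p" and op: "odd p" and n: "n \<ge> 1" and card: "CARD('b::{field,finite}) = p"
  shows "rdickson3 (n * p ^ k) 1 ([:0, 1:] :: 'b poly)
          = (rdickson3 n 1 [:0, 1:]) ^ (p ^ k) * [:1, -4:] ^ ((p ^ k - 1) div 2)"
proof -
  have ch: "CHAR('b) = p" using ff_CHAR[of p 1] p card by simp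
  have c: "of_nat p = (0::'b poly)" using ch of_nat_CHAR[where 'a="'b poly"] semiring_char_poly[where 'a='b] by simp
  have two: "(2::'b) \<noteq> 0" using two_ne0 p op ch by blast
  define X where "X = ([:0, 1:] :: 'b poly)"
  define Z where "Z = X * (1 - X)"
  define P where "P = p ^ k"
  define a where "a = (P - 1) div 2"
  have oP: "odd P" unfolding P_def using op by simp
  then have Pa: "P = Suc (2 * a)" unfolding a_def by presburger
  have L: "pcompose [:1, -4:] Z = (2 * X - 1) ^ 2"
    unfolding Z_def X_def by (simp add: pcompose_pCons algebra_simps power2_eq_square numeral_poly one_pCons)
  have nz: "2 * X - 1 \<noteq> 0"
  proof
    assume "2 * X - 1 = 0"
    then have "Polynomial.coeff (2 * X - 1) 1 = 0" by simp
    then show False using two unfolding X_def by (simp add: numeral_poly)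
  qed
  define Q where "Q = rdickson3 (n * P) 1 X - (rdickson3 n 1 X) ^ P * [:1, -4:] ^ a"
  have pQ: "pcompose Q Z = rdickson3 (n * P) 1 Z - (rdickson3 n 1 Z) ^ P * ((2 * X - 1) ^ 2) ^ a"
    unfolding Q_def X_def pcompose_diff pcompose_mult pcomp_power pcomp_rdickson3 L[unfolded X_def] by simp
  have nP: "n * P \<ge> 1" using n oP by (cases P) auto
  have "(2 * X - 1) * rdickson3 (n * P) 1 Z = X ^ (n * P) - (1 - X) ^ (n * P)"
    unfolding Z_def by (rule rdickson3_y[OF nP])
  also have "\<dots> = (X ^ n) ^ P - ((1 - X) ^ n) ^ P" by (simp add: power_mult)
  also have "\<dots> = (X ^ n - (1 - X) ^ n) ^ P" unfolding P_def by (rule frob_diff[OF p c, symmetric])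
  also have "X ^ n - (1 - X) ^ n = (2 * X - 1) * rdickson3 n 1 Z"
    unfolding Z_def by (rule rdickson3_y[OF n, symmetric])
  also have "((2 * X - 1) * rdickson3 n 1 Z) ^ P = (2 * X - 1) * (((2 * X - 1) ^ 2) ^ a * rdickson3 n 1 Z ^ P)"
    unfolding Pa by (simp add: power_mult_distrib power_mult[symmetric])
  finally have "(2 * X - 1) * pcompose Q Z = 0" unfolding pQ by (simp add: algebra_simps)
  then have "pcompose Q Z = 0" using nz by simp
  moreover have "degree Z > 0" unfolding Z_def X_def by (simp add: one_pCons)
  ultimately have "Q = 0" by (rule pcompose_eq_0)
  then show ?thesis unfolding Q_def X_def P_def a_def by simp
qed

lemma const_pow: "[:c:] ^ n = [:c ^ n:]"
  by (induction n) (simp_all add: one_pCons mult_ac)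

lemma const_sum: "(\<Sum>i\<in>A. [:f i:]) = [:\<Sum>i\<in>A. f i:]"
  by (induction A rule: infinite_finite_induct) simp_all

lemma FF_zero: "FF m (0::'a::comm_ring_1) = 1"
proof -
  have "FF m (0::'a) = (\<Sum>i\<le>m. if i = 0 then 1 else 0)"
    unfolding FF_def U_def by (intro sum.cong refl) (auto simp: power_0_left)
  also have "\<dots> = 1" by simp
  finally show ?thesis .
qed

lemma rdickson3_const: "rdickson3 n 1 [:c:] = [:rdickson3 n 1 (c::'a::comm_ring_1):]"
  unfolding rdickson3_def by (simp add: const_pow of_nat_poly const_sum mult_ac flip: pCons_one)

lemma test1:
  fixes h :: "'c::field"
  assumes "2 * h = 1"
  shows "2 * [:h, h:] - 1 = [:0, 1:]" "1 - [:h, h:] = [:h, -h:]"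
  using assms by (simp_all add: numeral_poly one_pCons algebra_simps)

lemma test2:
  fixes h :: "'c::field"
  shows "[:h, h:] * [:h, -h:] = [:h*h, 0, -(h*h):]"
  by (simp add: algebra_simps)

lemma test3:
  fixes a b :: "'c::field"
  shows "[:a, b:] = [:a:] + [:b:] * [:0, 1:]"
  by simp

lemma test4:
  fixes a b :: "'c::field"
  shows "[:a:] + [:b:] * [:0, 1:] * [:e:] = [:a, b * e:]"
  by simp

lemma unit_period:
  fixes u w M :: "'c::field poly"
  assumes uw: "[u * w = 1] (mod M)" and uq: "[u ^ Q = u] (mod M)" and Q: "Q \<ge> 1"
  shows "[u ^ N = u ^ (N mod (Q - 1))] (mod M)"
proof -
  define K where "K = Q - 1"
  have "[u ^ K * (u * w) = u ^ K * 1] (mod M)" by (intro cong_mult cong_refl uw)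
  then have "[u ^ K = u ^ K * (u * w)] (mod M)" by (metis cong_sym mult_1_right)
  also have "u ^ K * (u * w) = u ^ Suc K * w" by (simp add: mult_ac)
  also have "Suc K = Q" unfolding K_def using Q by simp
  also have "[u ^ Q * w = u * w] (mod M)" using cong_mult[OF uq cong_refl[of w]] .
  also have "[u * w = 1] (mod M)" by (rule uw)
  finally have uK: "[u ^ K = 1] (mod M)" .
  have NN: "N = N mod K + K * (N div K)" by simp
  have "u ^ N = u ^ (N mod K + K * (N div K))" using NN by (rule arg_cong)
  also have "\<dots> = u ^ (N mod K) * (u ^ K) ^ (N div K)" by (simp only: power_add power_mult)
  also have "[\<dots> = u ^ (N mod K) * 1 ^ (N div K)] (mod M)"
    by (intro cong_mult cong_refl cong_pow uK)
  finally show ?thesis unfolding K_def by simp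
qed

lemma rd_cong:
  fixes a b M :: "'c::field poly"
  assumes "[a = b] (mod M)"
  shows "[rdickson3 n 1 a = rdickson3 n 1 b] (mod M)"
  unfolding rdickson3_def
  by (intro cong_sum cong_mult cong_refl cong_pow cong_uminus assms)

lemma part3:
  fixes p e n1 n2 :: nat and x0 :: "'c::{field,finite}"
  assumes p: "prime p" and op: "odd p" and e: "e \<ge> 1" and card: "CARD('c) = p ^ e"
    and n1: "n1 \<ge> 1" and n2: "n2 \<ge> 1" and cg: "[n1 = n2] (mod ((p ^ e)\<^sup>2 - 1))"
    and x0: "x0 \<noteq> 1/4"
  shows "rdickson3 n1 1 x0 = rdickson3 n2 1 x0"
proof (cases "x0 = 0")
  case True
  obtain m1 where m1: "n1 = Suc m1" using n1 by (cases n1) auto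
  obtain m2 where m2: "n2 = Suc m2" using n2 by (cases n2) auto
  show ?thesis unfolding True m1 m2 rdickson3_FF FF_zero ..
next
  case x00: False
  define q where "q = p ^ e"
  have ch: "CHAR('c) = p" using ff_CHAR[OF p e card] .
  have two: "(2::'c) \<noteq> 0" using two_ne0 p op ch by blast
  have c: "of_nat p = (0::'c poly)" using ch of_nat_CHAR[where 'a="'c poly"] semiring_char_poly[where 'a='c] by simp
  have qpow: "\<And>a::'c. a ^ q = a" unfolding q_def card[symmetric] by (rule ff_power_card)
  have oq: "odd q" unfolding q_def using op by simp
  define r where "r = (q - 1) div 2"
  have qr: "q = Suc (2 * r)" unfolding r_def using oq by presburger
  define h :: 'c where "h = 1 / 2"
  have h2: "2 * h = 1" unfolding h_def using two by simp
  have hh: "h * h = 1/4" unfolding h_def by simp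
  have four: "(4::'c) \<noteq> 0" using two by (metis mult_2 mult_eq_0_iff numeral_Bit0 one_add_one)
  define D :: 'c where "D = 1 - 4 * x0"
  have D0: "D \<noteq> 0"
  proof
    assume "D = 0"
    then have "4 * x0 = 1" unfolding D_def by simp
    moreover have "(4::'c) \<noteq> 0" using two by (metis mult_2 mult_eq_0_iff numeral_Bit0 one_add_one)
    ultimately have "x0 = 1/4" by (simp add: field_simps)
    with x0 show False by simp
  qed
  define S :: "'c poly" where "S = [:0, 1:]"
  define M :: "'c poly" where "M = [:-D, 0, 1:]"
  have SM: "[S ^ 2 = [:D:]] (mod M)"
  proof -
    have "S ^ 2 - [:D:] = M" unfolding S_def M_def by (simp add: power2_eq_square)
    then show ?thesis by (simp add: cong_iff_dvd_diff)
  qed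
  define \<epsilon> where "\<epsilon> = D ^ r"
  have eps: "\<epsilon> * \<epsilon> = 1"
  proof -
    have "D * (\<epsilon> * \<epsilon>) = D ^ q" unfolding \<epsilon>_def qr by (simp add: power_mult[symmetric] power2_eq_square mult_2
          flip: power_add)
    also have "\<dots> = D" by (rule qpow)
    finally show ?thesis using D0 by simp
  qed
  have step: "[[:a, b:] ^ q = [:a, b * \<epsilon>:]] (mod M)" for a b
  proof -
    have "[:a, b:] ^ q = ([:a:] + [:b:] * S) ^ q" unfolding S_def by simp
    also have "\<dots> = [:a:] ^ q + [:b:] ^ q * S ^ q"
      unfolding q_def by (simp only: frob_pow[OF p c] power_mult_distrib)
    also have "\<dots> = [:a:] + [:b:] * S ^ q" by (simp add: const_pow qpow)
    also have "S ^ q = S * (S ^ 2) ^ r" unfolding qr by (simp add: power_mult)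
    also have "[[:a:] + [:b:] * (S * (S ^ 2) ^ r) = [:a:] + [:b:] * (S * [:D:] ^ r)] (mod M)"
      by (intro cong_add cong_mult cong_refl cong_pow SM)
    also have "[:a:] + [:b:] * (S * [:D:] ^ r) = [:a, b * \<epsilon>:]"
      unfolding S_def \<epsilon>_def by (simp add: const_pow)
    finally show ?thesis .
  qed
  have per: "[[:a, b:] ^ (q\<^sup>2) = [:a, b:]] (mod M)" for a b
  proof -
    have "[:a, b:] ^ (q\<^sup>2) = ([:a, b:] ^ q) ^ q" by (simp add: power2_eq_square power_mult)
    also have "[\<dots> = [:a, b * \<epsilon>:] ^ q] (mod M)" by (intro cong_pow step)
    also have "[[:a, b * \<epsilon>:] ^ q = [:a, b * \<epsilon> * \<epsilon>:]] (mod M)" by (rule step)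
    also have "[:a, b * \<epsilon> * \<epsilon>:] = [:a, b:]" using eps by (simp add: mult.assoc)
    finally show ?thesis .
  qed
  define y where "y = [:h, h:]"
  define z where "z = [:h, -h:]"
  have yS: "2 * y - 1 = S" and yz: "1 - y = z"
    using h2 unfolding y_def z_def S_def by (simp_all add: numeral_poly one_pCons algebra_simps)
  have yzx: "[y * z = [:x0:]] (mod M)"
  proof -
    have "y * z - [:x0:] = [:h*h - x0, 0, -(h*h):]" unfolding y_def z_def by (simp add: algebra_simps)
    also have "\<dots> = [:-1/4:] * M" unfolding hh M_def D_def using four by (simp add: algebra_simps)
    finally show ?thesis by (simp add: cong_iff_dvd_diff dvd_smult)
  qed
  have yinv: "[y * (z * [:1/x0:]) = 1] (mod M)"
  proof -
    have "[y * z * [:1/x0:] = [:x0:] * [:1/x0:]] (mod M)" by (intro cong_mult cong_refl yzx)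
    then show ?thesis using x00 by (simp add: mult.assoc one_pCons)
  qed
  have zinv: "[z * (y * [:1/x0:]) = 1] (mod M)" using yinv by (simp add: mult_ac)
  define K where "K = q\<^sup>2 - 1"
  have Q1: "q\<^sup>2 \<ge> 1" using oq by (cases q) auto
  have yp: "[y ^ N = y ^ (N mod K)] (mod M)" for N
    unfolding K_def using unit_period[OF yinv _ Q1] per unfolding y_def by blast
  have zp: "[z ^ N = z ^ (N mod K)] (mod M)" for N
    unfolding K_def using unit_period[OF zinv _ Q1] per unfolding z_def by blast
  have nm: "n1 mod K = n2 mod K" using cg unfolding K_def q_def by (simp add: cong_def)
  have main: "[S * [:rdickson3 n 1 x0:] = y ^ (n mod K) - z ^ (n mod K)] (mod M)" if n: "n \<ge> 1" for n
  proof -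
    have "[S * [:rdickson3 n 1 x0:] = S * rdickson3 n 1 (y * z)] (mod M)"
      unfolding rdickson3_const[symmetric] by (intro cong_mult cong_refl rd_cong cong_sym[OF yzx])
    also have "S * rdickson3 n 1 (y * z) = y ^ n - z ^ n"
      using rdickson3_y[OF n, of y] unfolding yS yz .
    also have "[y ^ n - z ^ n = y ^ (n mod K) - z ^ (n mod K)] (mod M)"
      by (intro cong_diff yp zp)
    finally show ?thesis .
  qed
  have "[S * [:rdickson3 n1 1 x0:] = S * [:rdickson3 n2 1 x0:]] (mod M)"
    using cong_trans[OF main[OF n1] cong_sym[OF main[OF n2, folded nm]]] .
  then have dv: "M dvd [:0, rdickson3 n1 1 x0 - rdickson3 n2 1 x0:]"
    unfolding S_def by (simp add: cong_iff_dvd_diff algebra_simps)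
  show ?thesis
  proof (rule ccontr)
    assume ne: "rdickson3 n1 1 x0 \<noteq> rdickson3 n2 1 x0"
    then have "[:0, rdickson3 n1 1 x0 - rdickson3 n2 1 x0:] \<noteq> 0" by simp
    from dvd_imp_degree_le[OF dv this] ne show False unfolding M_def by simp
  qed
qed

theorem theorem2p3:
  fixes p e n k :: nat
  assumes "prime p" and "odd p" and "e \<ge> 1" and "n \<ge> 1" and "k \<ge> 1"
  shows
    "(\<forall>y :: 'a :: field. CHAR('a) = p \<longrightarrow> y \<noteq> 1/2 \<longrightarrow>
        rdickson3 n 1 (y * (1 - y)) = (y ^ n - (1 - y) ^ n) / (2 * y - 1))
     \<and> (CHAR('a) = p \<longrightarrow> rdickson3 n (1 :: 'a) (1/4) = of_nat n / 2 ^ (n - 1))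
     \<and> ((CARD('b) = p \<and> coprime n k) \<longrightarrow>
        rdickson3 (n * p ^ k) 1 ([:0, 1:] :: 'b :: {field, finite} poly)
          = (rdickson3 n 1 [:0, 1:]) ^ (p ^ k) * [:1, -4:] ^ ((p ^ k - 1) div 2))
     \<and> (\<forall>n1 n2 (x0 :: 'c :: {field, finite}). CARD('c) = p ^ e \<longrightarrow>
        n1 \<ge> 1 \<longrightarrow> n2 \<ge> 1 \<longrightarrow> [n1 = n2] (mod ((p ^ e)\<^sup>2 - 1)) \<longrightarrow>
        x0 \<noteq> 1/4 \<longrightarrow> rdickson3 n1 1 x0 = rdickson3 n2 1 x0)"
  proof (intro conjI allI impI)
  fix y :: 'a
  assume ch: "CHAR('a) = p" and y: "y \<noteq> 1/2"
  have two: "(2::'a) \<noteq> 0" using two_ne0 assms(1,2) ch by blast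
  have nz: "2 * y - 1 \<noteq> 0"
  proof
    assume "2 * y - 1 = 0"
    then have "y = 1/2" using two by (simp add: field_simps)
    with y show False by simp
  qed
  show "rdickson3 n 1 (y * (1 - y)) = (y ^ n - (1 - y) ^ n) / (2 * y - 1)"
    using rdickson3_y[OF assms(4), of y] nz by (simp add: eq_divide_eq mult.commute)
next
  assume ch: "CHAR('a) = p"
  have two: "(2::'a) \<noteq> 0" using two_ne0 assms(1,2) ch by blast
  obtain m where n: "n = Suc m" using assms(4) by (cases n) auto
  have "2 ^ m * FF m (1/4 :: 'a) = of_nat (m+1)" using FF_quarter[OF two] by blast
  then show "rdickson3 n (1 :: 'a) (1/4) = of_nat n / 2 ^ (n - 1)"
    unfolding n rdickson3_FF using two by (simp add: eq_divide_eq mult.commute)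
next
  assume "CARD('b) = p \<and> coprime n k"
  then show "rdickson3 (n * p ^ k) 1 ([:0, 1:] :: 'b :: {field, finite} poly)
          = (rdickson3 n 1 [:0, 1:]) ^ (p ^ k) * [:1, -4:] ^ ((p ^ k - 1) div 2)"
    using part2[OF assms(1,2,4)] by blast
next
  fix n1 n2 and x0 :: 'c
  assume "CARD('c) = p ^ e" "n1 \<ge> 1" "n2 \<ge> 1" "[n1 = n2] (mod ((p ^ e)\<^sup>2 - 1))" "x0 \<noteq> 1/4"
  then show "rdickson3 n1 1 x0 = rdickson3 n2 1 x0"
    using part3[OF assms(1,2,3)] by blast
qed

end
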